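(* Let $\mathcal{F}$ be a finite set of complex-valued (algebraic) functions on Boolean variables, and consider the counting problem $\#\neq_2\,|\,\mathcal{F}$, whose inputs are bipartite tensor networks in which every vertex on one side carries the binary disequality function $\neq_2$ (i.e. the matrix $\begin{pmatrix}0&1\\1&0\end{pmatrix}$) and every vertex on the other side carries a function from $\mathcal{F}$, and which asks for the value of the network. Assume that every arity-2 gadget realizable in this problem has the form $\lambda\,(\neq_2)$ for some constant $\lambda$ (possibly $0$), and that every arity-4 gadget realizable in this problem has the form $\lambda\,(\neq_2)\otimes(\neq_2)$ for some constant $\lambda$ (possibly $0$). Then for every positive integer $n$, the value of $\#\neq_2\,|\,\mathcal{F}$ is either zero on all input tensor networks with $n$ vertices (from $\mathcal{F}$), or nonzero on all input tensor networks with $n$ vertices.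
   Context: A tensor network's value is the sum over all Boolean assignments to its edges of the product of its vertex function values. The proof uses a "one step" transformation: given a network $G$ containing two edges $\neq_2(x,y)$ and $\neq_2(z,w)$, replace them by $\neq_2(x,z)$ and $\neq_2(y,w)$ to get $G'$; cutting the two edges yields an arity-4 gadget of the form $\lambda\,(\neq_2)\otimes(\neq_2)$, so the values of $G$ and $G'$ are each $2\lambda$ or $4\lambda$, hence both zero or both nonzero (with ratio $1$, $2$ or $1/2$). Such steps connect all networks with $n$ vertices. *)

theory Defs
  imports Complex_Main "HOL-Library.FuncSet"
begin

text \<open>A signature (constraint function) is a pair (arity k, function on Boolean
  lists); the function is only meaningful on lists of length k.\<close>
type_synonym sig = "nat \<times> (bool list \<Rightarrow> complex)"

definition neq2 :: "bool \<Rightarrow> bool \<Rightarrow> complex" where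
  "neq2 a b = (if a \<noteq> b then 1 else 0)"

text \<open>Ports (edge slots) of a list of F-side vertices: port (i,j) is the j-th
  input of vertex i.\<close>
definition ports :: "sig list \<Rightarrow> (nat \<times> nat) set" where
  "ports vs = {(i, j). i < length vs \<and> j < fst (vs ! i)}"

text \<open>A wiring of a bipartite network/gadget for #(neq2 | F): the ports listed
  in ds are dangling edges (in this order); all other ports are paired up by
  the fixed-point-free involution m, each pair joined through one neq2 vertex.\<close>
definition valid_wiring :: "sig list \<Rightarrow> (nat \<times> nat \<Rightarrow> nat \<times> nat) \<Rightarrow> (nat \<times> nat) list \<Rightarrow> bool" where
  "valid_wiring vs m ds \<longleftrightarrow> distinct ds \<and> set ds \<subseteq> ports vs \<and>
     (\<forall>p \<in> ports vs - set ds. m p \<in> ports vs - set ds \<and> m p \<noteq> p \<and> m (m p) = p)"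

definition gadget_sig :: "sig list \<Rightarrow> (nat \<times> nat \<Rightarrow> nat \<times> nat) \<Rightarrow> (nat \<times> nat) list \<Rightarrow> bool list \<Rightarrow> complex" where
  "gadget_sig vs m ds xs =
     (\<Sum>\<sigma> \<in> PiE (ports vs) (\<lambda>_. UNIV :: bool set).
        (if (\<forall>k < length ds. \<sigma> (ds ! k) = xs ! k)
         then (\<Prod>p \<in> ports vs - set ds. neq2 (\<sigma> p) (\<sigma> (m p))) *
              (\<Prod>i < length vs. snd (vs ! i) (map (\<lambda>j. \<sigma> (i, j)) [0..<fst (vs ! i)]))
         else 0))"

definition network_value :: "sig list \<Rightarrow> (nat \<times> nat \<Rightarrow> nat \<times> nat) \<Rightarrow> complex" where
  "network_value vs m = gadget_sig vs m [] []"

definition realizable :: "sig set \<Rightarrow> nat \<Rightarrow> (bool list \<Rightarrow> complex) set" where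
  "realizable F k = {gadget_sig vs m ds | vs m ds.
      set vs \<subseteq> F \<and> valid_wiring vs m ds \<and> length ds = k}"

end

theory Submission
  imports Defs
begin

definition phi :: "sig list \<Rightarrow> (nat \<times> nat \<Rightarrow> bool) \<Rightarrow> complex" where
  "phi vs \<sigma> = (\<Prod>i < length vs. snd (vs ! i) (map (\<lambda>j. \<sigma> (i, j)) [0..<fst (vs ! i)]))"

lemma finite_ports: "finite (ports vs)"
proof -
  have "ports vs = Sigma {..<length vs} (\<lambda>i. {..<fst (vs!i)})" by (auto simp: ports_def)
  then show ?thesis by simp
qed

lemma nv_eq: "network_value vs m = (\<Sum>\<sigma> \<in> PiE (ports vs) (\<lambda>_. UNIV).
   (\<Prod>p \<in> ports vs. neq2 (\<sigma> p) (\<sigma> (m p))) * phi vs \<sigma>)"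
  by (simp add: network_value_def gadget_sig_def phi_def)

lemma gs4: "gadget_sig vs m [x,y,z,w] [a,b,c,d] = (\<Sum>\<sigma> \<in> PiE (ports vs) (\<lambda>_. UNIV).
   (if \<sigma> x = a \<and> \<sigma> y = b \<and> \<sigma> z = c \<and> \<sigma> w = d then
   (\<Prod>p \<in> ports vs - {x,y,z,w}. neq2 (\<sigma> p) (\<sigma> (m p))) * phi vs \<sigma> else 0))"
proof -
  have *: "(\<forall>k < length [x,y,z,w]. \<sigma> ([x,y,z,w] ! k) = [a,b,c,d] ! k) \<longleftrightarrow>
     (\<sigma> x = a \<and> \<sigma> y = b \<and> \<sigma> z = c \<and> \<sigma> w = d)" for \<sigma> :: "nat\<times>nat \<Rightarrow> bool"
    by (auto simp: less_Suc_eq numeral_eq_Suc)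
  have **: "set [x,y,z,w] = {x,y,z,w}" by simp
  show ?thesis unfolding gadget_sig_def phi_def ** using * by simp
qed

lemma nv_cong: "\<forall>p \<in> ports vs. m p = m' p \<Longrightarrow> network_value vs m = network_value vs m'"
  unfolding nv_eq by (intro sum.cong prod.cong refl arg_cong2[where f="(*)"]) auto

lemma gs_perm:
  assumes "\<forall>p. p \<notin> {x,y,z,w} \<longrightarrow> m' p = m p"
  shows "gadget_sig vs m' [x,z,y,w] [a,b,c,d] = gadget_sig vs m [x,y,z,w] [a,c,b,d]"
proof -
  have "{x,z,y,w} = {x,y,z,w}" by auto
  then show ?thesis unfolding gs4 using assms
    by (intro sum.cong refl) (auto intro!: prod.cong arg_cong2[where f="(*)"])
qed

abbreviation K4 :: "bool \<Rightarrow> bool \<Rightarrow> bool \<Rightarrow> bool \<Rightarrow> complex" where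
  "K4 a b c d \<equiv> neq2 a b * neq2 b a * neq2 c d * neq2 d c"

lemma decomp:
  assumes "distinct [x,y,z,w]" "{x,y,z,w} \<subseteq> ports vs" "m x = y" "m y = x" "m z = w" "m w = z"
  shows "network_value vs m = (\<Sum>a\<in>UNIV. \<Sum>b\<in>UNIV. \<Sum>c\<in>UNIV. \<Sum>d\<in>UNIV.
           gadget_sig vs m [x,y,z,w] [a,b,c,d] * K4 a b c d)"
proof -
  let ?P = "ports vs" and ?S = "{x,y,z,w}"
  let ?H = "\<lambda>\<sigma>. (\<Prod>p \<in> ?P - ?S. neq2 (\<sigma> p) (\<sigma> (m p))) * phi vs \<sigma>"
  have split: "(\<Prod>p \<in> ?P. neq2 (\<sigma> p) (\<sigma> (m p))) =
     (\<Prod>p \<in> ?P - ?S. neq2 (\<sigma> p) (\<sigma> (m p))) * K4 (\<sigma> x) (\<sigma> y) (\<sigma> z) (\<sigma> w)" for \<sigma>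
  proof -
    have "(\<Prod>p \<in> ?P. neq2 (\<sigma> p) (\<sigma> (m p))) =
     (\<Prod>p \<in> ?P - ?S. neq2 (\<sigma> p) (\<sigma> (m p))) * (\<Prod>p \<in> ?S. neq2 (\<sigma> p) (\<sigma> (m p)))"
      using assms(2) finite_ports by (rule prod.subset_diff)
    moreover have "(\<Prod>p \<in> ?S. neq2 (\<sigma> p) (\<sigma> (m p))) = K4 (\<sigma> x) (\<sigma> y) (\<sigma> z) (\<sigma> w)"
      using assms(1,3-6) by (simp add: mult_ac)
    ultimately show ?thesis by simp
  qed
  have pt: "(\<Sum>a\<in>UNIV. \<Sum>b\<in>UNIV. \<Sum>c\<in>UNIV. \<Sum>d\<in>UNIV.
      (if \<sigma> x = a \<and> \<sigma> y = b \<and> \<sigma> z = c \<and> \<sigma> w = d then ?H \<sigma> else 0) * K4 a b c d)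
      = ?H \<sigma> * K4 (\<sigma> x) (\<sigma> y) (\<sigma> z) (\<sigma> w)" for \<sigma> :: "nat \<times> nat \<Rightarrow> bool"
    by (cases "\<sigma> x"; cases "\<sigma> y"; cases "\<sigma> z"; cases "\<sigma> w") (simp_all add: UNIV_bool)
  have "network_value vs m = (\<Sum>\<sigma> \<in> PiE ?P (\<lambda>_. UNIV). ?H \<sigma> * K4 (\<sigma> x) (\<sigma> y) (\<sigma> z) (\<sigma> w))"
    unfolding nv_eq split by (simp add: mult_ac)
  also have "\<dots> = (\<Sum>\<sigma> \<in> PiE ?P (\<lambda>_. UNIV). \<Sum>a\<in>UNIV. \<Sum>b\<in>UNIV. \<Sum>c\<in>UNIV. \<Sum>d\<in>UNIV.
      (if \<sigma> x = a \<and> \<sigma> y = b \<and> \<sigma> z = c \<and> \<sigma> w = d then ?H \<sigma> else 0) * K4 a b c d)"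
    using pt by simp
  also have "\<dots> = (\<Sum>a\<in>UNIV. \<Sum>b\<in>UNIV. \<Sum>c\<in>UNIV. \<Sum>d\<in>UNIV. \<Sum>\<sigma> \<in> PiE ?P (\<lambda>_. UNIV).
      (if \<sigma> x = a \<and> \<sigma> y = b \<and> \<sigma> z = c \<and> \<sigma> w = d then ?H \<sigma> else 0) * K4 a b c d)"
    by (simp only: sum.swap[of _ "PiE ?P (\<lambda>_. UNIV)"])
  also have "\<dots> = (\<Sum>a\<in>UNIV. \<Sum>b\<in>UNIV. \<Sum>c\<in>UNIV. \<Sum>d\<in>UNIV.
           gadget_sig vs m [x,y,z,w] [a,b,c,d] * K4 a b c d)"
    unfolding gs4 by (simp add: sum_distrib_right)
  finally show ?thesis .
qed

lemma comb:
  fixes i j k l :: nat and lam :: complex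
  assumes "{i,j,k,l} = {0,1,2,3}"
  shows "(\<Sum>a\<in>UNIV. \<Sum>b\<in>UNIV. \<Sum>c\<in>UNIV. \<Sum>d\<in>UNIV.
       (lam * neq2 ([a,b,c,d]!i) ([a,b,c,d]!j) * neq2 ([a,b,c,d]!k) ([a,b,c,d]!l)) * K4 a b c d) = 0
     \<longleftrightarrow> lam = 0"
   and "(\<Sum>a\<in>UNIV. \<Sum>b\<in>UNIV. \<Sum>c\<in>UNIV. \<Sum>d\<in>UNIV.
       (lam * neq2 ([a,c,b,d]!i) ([a,c,b,d]!j) * neq2 ([a,c,b,d]!k) ([a,c,b,d]!l)) * K4 a b c d) = 0
     \<longleftrightarrow> lam = 0"
proof -
  have "card (set [i,j,k,l]) = length [i,j,k,l]" using assms by simp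
  then have d: "distinct [i,j,k,l]" by (rule card_distinct)
  have r: "i \<in> {0,1,2,3}" "j \<in> {0,1,2,3}" "k \<in> {0,1,2,3}" "l \<in> {0,1,2,3}"
    using assms by blast+
  show "(\<Sum>a\<in>UNIV. \<Sum>b\<in>UNIV. \<Sum>c\<in>UNIV. \<Sum>d\<in>UNIV.
       (lam * neq2 ([a,b,c,d]!i) ([a,b,c,d]!j) * neq2 ([a,b,c,d]!k) ([a,b,c,d]!l)) * K4 a b c d) = 0
     \<longleftrightarrow> lam = 0"
    using r d by (simp only: insert_iff empty_iff) (elim disjE; simp add: UNIV_bool neq2_def)
  show "(\<Sum>a\<in>UNIV. \<Sum>b\<in>UNIV. \<Sum>c\<in>UNIV. \<Sum>d\<in>UNIV.
       (lam * neq2 ([a,c,b,d]!i) ([a,c,b,d]!j) * neq2 ([a,c,b,d]!k) ([a,c,b,d]!l)) * K4 a b c d) = 0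
     \<longleftrightarrow> lam = 0"
    using r d by (simp only: insert_iff empty_iff) (elim disjE; simp add: UNIV_bool neq2_def)
qed

lemma swap_step:
  assumes ar4: "\<forall>g \<in> realizable F 4. \<exists>lam. \<exists>a b c d :: nat. {a, b, c, d} = {0, 1, 2, 3} \<and>
               (\<forall>xs. length xs = 4 \<longrightarrow> g xs = lam * neq2 (xs ! a) (xs ! b) * neq2 (xs ! c) (xs ! d))"
    and F: "set vs \<subseteq> F" and v: "valid_wiring vs m []"
    and dd: "distinct [x,y,z,w]" and sub: "{x,y,z,w} \<subseteq> ports vs" and mx: "m x = y" and mz: "m z = w"
  shows "network_value vs m = 0 \<longleftrightarrow> network_value vs (m(x:=z, z:=x, y:=w, w:=y)) = 0"
proof -
  let ?m' = "m(x:=z, z:=x, y:=w, w:=y)"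
  have vv: "\<forall>p \<in> ports vs. m p \<in> ports vs \<and> m p \<noteq> p \<and> m (m p) = p"
    using v by (simp add: valid_wiring_def)
  have my: "m y = x" and mw: "m w = z" using vv sub mx mz by auto
  have ball: "\<forall>p \<in> ports vs - set [x,y,z,w]. m p \<in> ports vs - set [x,y,z,w] \<and> m p \<noteq> p \<and> m (m p) = p"
  proof
    fix p assume p: "p \<in> ports vs - set [x,y,z,w]"
    then have pp: "p \<in> ports vs" "p \<notin> {x,y,z,w}" by auto
    have "m p \<notin> {x,y,z,w}"
    proof
      assume "m p \<in> {x,y,z,w}"
      then have "m (m p) \<in> {x,y,z,w}" using mx my mz mw by auto
      then show False using vv pp by auto
    qed
    then show "m p \<in> ports vs - set [x,y,z,w] \<and> m p \<noteq> p \<and> m (m p) = p" using vv pp by auto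
  qed
  have vw: "valid_wiring vs m [x,y,z,w]"
    unfolding valid_wiring_def using dd sub ball by simp
  have "gadget_sig vs m [x,y,z,w] \<in> realizable F 4"
    unfolding realizable_def mem_Collect_eq using F vw
    by (intro exI[of _ vs] exI[of _ m] exI[of _ "[x,y,z,w]"]) simp
  from bspec[OF ar4 this] obtain lam i j k l where ijkl: "{i,j,k,l} = {0,1,2,3::nat}" and
    g: "\<forall>xs. length xs = 4 \<longrightarrow> gadget_sig vs m [x,y,z,w] xs = lam * neq2 (xs ! i) (xs ! j) * neq2 (xs ! k) (xs ! l)"
    by (elim exE conjE) (rule that; assumption)
  have g': "gadget_sig vs m [x,y,z,w] [a,b,c,d] = lam * neq2 ([a,b,c,d]!i) ([a,b,c,d]!j) * neq2 ([a,b,c,d]!k) ([a,b,c,d]!l)"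
    for a b c d by (rule g[rule_format]) simp
  have gp: "gadget_sig vs ?m' [x,z,y,w] [a,b,c,d] = gadget_sig vs m [x,y,z,w] [a,c,b,d]" for a b c d
    by (rule gs_perm) auto
  have "network_value vs m = (\<Sum>a\<in>UNIV. \<Sum>b\<in>UNIV. \<Sum>c\<in>UNIV. \<Sum>d\<in>UNIV.
           gadget_sig vs m [x,y,z,w] [a,b,c,d] * K4 a b c d)"
    by (rule decomp[OF dd sub mx my mz mw])
  also have "\<dots> = (\<Sum>a\<in>UNIV. \<Sum>b\<in>UNIV. \<Sum>c\<in>UNIV. \<Sum>d\<in>UNIV.
       (lam * neq2 ([a,b,c,d]!i) ([a,b,c,d]!j) * neq2 ([a,b,c,d]!k) ([a,b,c,d]!l)) * K4 a b c d)"
    by (simp only: g')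
  finally have e1: "network_value vs m = 0 \<longleftrightarrow> lam = 0" using comb(1)[OF ijkl] by (simp only:)
  have dd': "distinct [x,z,y,w]" using dd by auto
  have sub': "{x,z,y,w} \<subseteq> ports vs" using sub by auto
  have "network_value vs ?m' = (\<Sum>a\<in>UNIV. \<Sum>b\<in>UNIV. \<Sum>c\<in>UNIV. \<Sum>d\<in>UNIV.
           gadget_sig vs ?m' [x,z,y,w] [a,b,c,d] * K4 a b c d)"
    by (rule decomp[OF dd' sub']) (use dd in auto)
  also have "\<dots> = (\<Sum>a\<in>UNIV. \<Sum>b\<in>UNIV. \<Sum>c\<in>UNIV. \<Sum>d\<in>UNIV.
           gadget_sig vs m [x,y,z,w] [a,c,b,d] * K4 a b c d)"
    by (simp only: gp)
  also have "\<dots> = (\<Sum>a\<in>UNIV. \<Sum>b\<in>UNIV. \<Sum>c\<in>UNIV. \<Sum>d\<in>UNIV.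
       (lam * neq2 ([a,c,b,d]!i) ([a,c,b,d]!j) * neq2 ([a,c,b,d]!k) ([a,c,b,d]!l)) * K4 a b c d)"
    by (simp only: g')
  finally have e2: "network_value vs ?m' = 0 \<longleftrightarrow> lam = 0" using comb(2)[OF ijkl] by (simp only:)
  show ?thesis using e1 e2 by simp
qed

lemma all_equiv:
  assumes ar4: "\<forall>g \<in> realizable F 4. \<exists>lam. \<exists>a b c d :: nat. {a, b, c, d} = {0, 1, 2, 3} \<and>
               (\<forall>xs. length xs = 4 \<longrightarrow> g xs = lam * neq2 (xs ! a) (xs ! b) * neq2 (xs ! c) (xs ! d))"
    and F: "set vs \<subseteq> F" and v2: "valid_wiring vs m2 []"
  shows "valid_wiring vs m1 [] \<Longrightarrow> (network_value vs m1 = 0 \<longleftrightarrow> network_value vs m2 = 0)"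
proof (induction "card {p \<in> ports vs. m1 p \<noteq> m2 p}" arbitrary: m1 rule: less_induct)
  case less
  let ?P = "ports vs"
  let ?D = "{p \<in> ?P. m1 p \<noteq> m2 p}"
  have V1: "\<forall>q \<in> ?P. m1 q \<in> ?P \<and> m1 q \<noteq> q \<and> m1 (m1 q) = q"
    using less.prems by (simp add: valid_wiring_def)
  have V2: "\<forall>q \<in> ?P. m2 q \<in> ?P \<and> m2 q \<noteq> q \<and> m2 (m2 q) = q"
    using v2 by (simp add: valid_wiring_def)
  show ?case
  proof (cases "?D = {}")
    case True
    then have "network_value vs m1 = network_value vs m2" by (intro nv_cong) auto
    then show ?thesis by simp
  next
    case False
    then obtain p where p: "p \<in> ?P" "m1 p \<noteq> m2 p" by auto
    define y where "y = m1 p"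
    define z where "z = m2 p"
    define w where "w = m1 z"
    have yP: "y \<in> ?P" and zP: "z \<in> ?P" and wP: "w \<in> ?P"
      using V1 V2 p unfolding y_def z_def w_def by auto
    have my: "m1 y = p" and mw: "m1 w = z" and m2z: "m2 z = p"
      using V1 V2 p zP unfolding y_def z_def w_def by auto
    have dd: "distinct [p,y,z,w]"
    proof -
      have "p \<noteq> y" using V1 p unfolding y_def by auto
      moreover have "p \<noteq> z" using V2 p unfolding z_def by auto
      moreover have "y \<noteq> z" using p unfolding y_def z_def by auto
      moreover have "z \<noteq> w" using V1 zP unfolding w_def by auto
      moreover have "p \<noteq> w" using mw \<open>y \<noteq> z\<close> unfolding y_def by auto
      moreover have "y \<noteq> w" using mw my \<open>p \<noteq> z\<close> by auto
      ultimately show ?thesis by simp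
    qed
    have ne: "p \<noteq> y" "p \<noteq> z" "p \<noteq> w" "y \<noteq> z" "y \<noteq> w" "z \<noteq> w" using dd by auto
    define m1' where "m1' = m1(p:=z, z:=p, y:=w, w:=y)"
    have out: "m1 q \<notin> {p,y,z,w}" if "q \<in> ?P" "q \<notin> {p,y,z,w}" for q
    proof
      assume "m1 q \<in> {p,y,z,w}"
      then have "m1 (m1 q) \<in> {p,y,z,w}" using my mw unfolding y_def w_def by auto
      then show False using V1 that by auto
    qed
    have e': "m1' p = z" "m1' z = p" "m1' y = w" "m1' w = y" using ne by (simp_all add: m1'_def)
    have vm1': "valid_wiring vs m1' []"
      unfolding valid_wiring_def
    proof (simp, intro ballI)
      fix q assume q: "q \<in> ?P"
      show "m1' q \<in> ?P \<and> m1' q \<noteq> q \<and> m1' (m1' q) = q"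
      proof (cases "q \<in> {p,y,z,w}")
        case True
        then show ?thesis using ne e' yP zP wP p by (elim insertE emptyE) (simp_all add: ne[symmetric])
      next
        case False
        then have "m1' q = m1 q" unfolding m1'_def by auto
        moreover have "m1' (m1 q) = m1 (m1 q)" using out[OF q False] unfolding m1'_def by auto
        ultimately show ?thesis using V1 q by auto
      qed
    qed
    have sub: "{p \<in> ?P. m1' p \<noteq> m2 p} \<subset> ?D"
    proof -
      have "{p \<in> ?P. m1' p \<noteq> m2 p} \<subseteq> ?D - {p}"
      proof
        fix q assume q: "q \<in> {p \<in> ?P. m1' p \<noteq> m2 p}"
        show "q \<in> ?D - {p}"
        proof (cases "q \<in> {p,y,z,w}")
          case True
          have "m1' p = m2 p" "m1' z = m2 z" using e' m2z unfolding z_def by auto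
          moreover have "m1 y \<noteq> m2 y"
          proof
            assume "m1 y = m2 y"
            then have "m2 y = p" using my by simp
            then have "m2 (m2 y) = z" unfolding z_def by simp
            then show False using V2 yP ne by auto
          qed
          moreover have "m1 w \<noteq> m2 w"
          proof
            assume "m1 w = m2 w"
            then have "m2 w = z" using mw by simp
            then have "m2 (m2 w) = p" using m2z by simp
            then show False using V2 wP ne by auto
          qed
          ultimately show ?thesis using True q dd by auto
        next
          case False
          then have "m1' q = m1 q" unfolding m1'_def by auto
          then show ?thesis using q False by auto
        qed
      qed
      then show ?thesis using p by auto
    qed
    have "card {p \<in> ?P. m1' p \<noteq> m2 p} < card ?D"
      by (rule psubset_card_mono[OF _ sub]) (simp add: finite_ports)
    from less.hyps[OF this vm1'] have "network_value vs m1' = 0 \<longleftrightarrow> network_value vs m2 = 0" .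
    moreover have "network_value vs m1 = 0 \<longleftrightarrow> network_value vs m1' = 0"
      unfolding m1'_def
      by (rule swap_step[OF ar4 F less.prems dd]) (use p yP zP wP in \<open>auto simp: y_def w_def\<close>)
    ultimately show ?thesis by simp
  qed
qed

theorem mainTheorem16:
  fixes F :: "sig set"
  assumes "finite F"
    and ar2: "\<forall>g \<in> realizable F 2. \<exists>lam. \<forall>x y. g [x, y] = lam * neq2 x y"
    and ar4: "\<forall>g \<in> realizable F 4. \<exists>lam. \<exists>a b c d :: nat. {a, b, c, d} = {0, 1, 2, 3} \<and>
               (\<forall>xs. length xs = 4 \<longrightarrow> g xs = lam * neq2 (xs ! a) (xs ! b) * neq2 (xs ! c) (xs ! d))"
  shows "\<forall>n > 0. \<forall>vs. length vs = n \<and> set vs \<subseteq> F \<longrightarrow>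
           (\<forall>m. valid_wiring vs m [] \<longrightarrow> network_value vs m = 0) \<or>
           (\<forall>m. valid_wiring vs m [] \<longrightarrow> network_value vs m \<noteq> 0)"
proof (intro allI impI)
  fix n vs assume h: "length vs = n \<and> set vs \<subseteq> F"
  show "(\<forall>m. valid_wiring vs m [] \<longrightarrow> network_value vs m = 0) \<or>
           (\<forall>m. valid_wiring vs m [] \<longrightarrow> network_value vs m \<noteq> 0)"
  proof (cases "\<exists>m0. valid_wiring vs m0 [] \<and> network_value vs m0 = 0")
    case True
    then obtain m0 where m0: "valid_wiring vs m0 []" "network_value vs m0 = 0" by blast
    have "\<forall>m. valid_wiring vs m [] \<longrightarrow> network_value vs m = 0"
      using all_equiv[OF ar4 _ m0(1)] h m0(2) by blast
    then show ?thesis by blast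
  next
    case False
    then show ?thesis by blast
  qed
qed

end
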